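(* Let $f({\bf X})=\sum_{k=1}^{K}\alpha_k g_k({\bf X}^{\mathrm H}{\bf A}_k{\bf X})$ be a generalized quadratic matrix function on $\mathbb{C}^{n\times r}$ and ${\bf X}_0\in\mathbb{C}^{n\times r}$. Define $$\bar f({\bf X};{\bf X}_0)=\sum_{k:\alpha_k>0}\alpha_k\, l_k({\bf X};{\bf X}_0)+\sum_{k:\alpha_k<0}\alpha_k\, u_k({\bf X};{\bf X}_0),$$ where $l_k$ and $u_k$ are the lower and upper bound functions associated with $(g_k,{\bf A}_k,{\bf X}_0)$. Then $\bar f(\cdot;{\bf X}_0)$ is concave on $\mathbb{C}^{n\times r}$, $\bar f({\bf X};{\bf X}_0)\le f({\bf X})$ for all ${\bf X}$, $\bar f({\bf X}_0;{\bf X}_0)=f({\bf X}_0)$, and $\bar f(\cdot;{\bf X}_0)$ and $f$ have the same (real Fréchet) derivative at ${\bf X}_0$.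
   Context: $\mathbb{H}^m$: real vector space of $m\times m$ complex Hermitian matrices, inner product $\mathrm{tr}({\bf U}{\bf V})$; ${\bf U}\succeq{\bf V}$ means ${\bf U}-{\bf V}$ is positive semidefinite. For ${\bf A}\in\mathbb{H}^n$ with eigen-decomposition $\sum_i\lambda_i{\bf u}_i{\bf u}_i^{\mathrm H}$, ${\bf A}^{(+)}=\sum_{\lambda_i>0}\lambda_i{\bf u}_i{\bf u}_i^{\mathrm H}$, ${\bf A}^{(-)}=\sum_{\lambda_i<0}\lambda_i{\bf u}_i{\bf u}_i^{\mathrm H}$. $g:\mathbb{H}^r\to\mathbb{R}$ is MND if ${\bf W}_1\succeq{\bf W}_2\Rightarrow g({\bf W}_1)\ge g({\bf W}_2)$ and MNI if ${\bf W}_1\succeq{\bf W}_2\Rightarrow g({\bf W}_1)\le g({\bf W}_2)$; $\mathcal{G}$ is the family of differentiable convex $g:\mathbb{H}^r\to\mathbb{R}$ that are MND or MNI; $\nabla g({\bf W}_0)\in\mathbb{H}^r$ is the gradient w.r.t. $\mathrm{tr}({\bf U}{\bf V})$. A generalized quadratic matrix function is $f({\bf X})=\sum_{k=1}^K\alpha_k g_k({\bf X}^{\mathrm H}{\bf A}_k{\bf X})$ with $\alpha_k\in\mathbb{R}$, ${\bf A}_k\in\mathbb{H}^n$, $g_k\in\mathcal{G}$. For $(g,{\bf A},{\bf X}_0)$ with ${\bf W}_0={\bf X}_0^{\mathrm H}{\bf A}{\bf X}_0$, ${\bf G}=\nabla g({\bf W}_0)$: the lower bound function is $l({\bf X};{\bf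 X}_0)=\mathrm{tr}({\bf L}({\bf X}){\bf G})+g({\bf W}_0)-\mathrm{tr}({\bf W}_0{\bf G})$, where ${\bf L}({\bf X})={\bf X}^{\mathrm H}{\bf A}^{(-)}{\bf X}+{\bf X}^{\mathrm H}{\bf A}^{(+)}{\bf X}_0+{\bf X}_0^{\mathrm H}{\bf A}^{(+)}{\bf X}-{\bf X}_0^{\mathrm H}{\bf A}^{(+)}{\bf X}_0$ if $g$ is MND and ${\bf L}({\bf X})={\bf X}^{\mathrm H}{\bf A}^{(+)}{\bf X}+{\bf X}^{\mathrm H}{\bf A}^{(-)}{\bf X}_0+{\bf X}_0^{\mathrm H}{\bf A}^{(-)}{\bf X}-{\bf X}_0^{\mathrm H}{\bf A}^{(-)}{\bf X}_0$ if $g$ is MNI; the upper bound function is $u({\bf X};{\bf X}_0)=g\big({\bf X}^{\mathrm H}{\bf A}^{(+)}{\bf X}+{\bf X}^{\mathrm H}{\bf A}^{(-)}{\bf X}_0+{\bf X}_0^{\mathrm H}{\bf A}^{(-)}{\bf X}-{\bf X}_0^{\mathrm H}{\bf A}^{(-)}{\bf X}_0\big)$ if $g$ is MND and $u({\bf X};{\bf X}_0)=g\big({\bf X}^{\mathrm H}{\bf A}^{(-)}{\bf X}+{\bf X}^{\mathrm H}{\bf A}^{(+)}{\bf X}_0+{\bf X}_0^{\mathrm H}{\bf A}^{(+)}{\bf X}-{\bf X}_0^{\mathrm H}{\bf A}^{(+)}{\bf X}_0\big)$ if $g$ is MNI. *)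

theory Defs
  imports "HOL-Analysis.Analysis"
begin

text \<open>Complex matrices are rendered with HOL-Analysis finite-type-indexed vectors:
  an m x p complex matrix has type complex^'p^'m (rows indexed by 'm).
  The space is a real normed vector space, so real Frechet derivatives and
  convexity over the reals make sense.\<close>

definition cadj :: "complex^'p^'m \<Rightarrow> complex^'m^'p" where
  "cadj X = (\<chi> i j. cnj (X $ j $ i))"

definition hermitian :: "complex^'m^'m \<Rightarrow> bool" where
  "hermitian A \<longleftrightarrow> cadj A = A"

definition hermitian_set :: "(complex^'m^'m) set" where
  "hermitian_set = {A. hermitian A}"

definition psd :: "complex^'m^'m \<Rightarrow> bool" where
  "psd M \<longleftrightarrow> hermitian M \<and> (\<forall>x::complex^'m. 0 \<le> Re (\<Sum>i\<in>UNIV. cnj (x $ i) * (M *v x) $ i))"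

definition loewner_ge :: "complex^'m^'m \<Rightarrow> complex^'m^'m \<Rightarrow> bool" where
  "loewner_ge U V \<longleftrightarrow> psd (U - V)"

definition unitary :: "complex^'m^'m \<Rightarrow> bool" where
  "unitary U \<longleftrightarrow> U ** cadj U = mat 1 \<and> cadj U ** U = mat 1"

definition rdiag :: "real^'m \<Rightarrow> complex^'m^'m" where
  "rdiag d = (\<chi> i j. if i = j then complex_of_real (d $ i) else 0)"

definition pos_part :: "complex^'m^'m \<Rightarrow> complex^'m^'m" where
  "pos_part A = (SOME P. \<exists>U (lam::real^'m). unitary U \<and> A = U ** rdiag lam ** cadj U
      \<and> P = U ** rdiag (\<chi> i. if lam $ i > 0 then lam $ i else 0) ** cadj U)"

definition neg_part :: "complex^'m^'m \<Rightarrow> complex^'m^'m" where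
  "neg_part A = (SOME P. \<exists>U (lam::real^'m). unitary U \<and> A = U ** rdiag lam ** cadj U
      \<and> P = U ** rdiag (\<chi> i. if lam $ i < 0 then lam $ i else 0) ** cadj U)"

definition MND :: "(complex^'r^'r \<Rightarrow> real) \<Rightarrow> bool" where
  "MND g \<longleftrightarrow> (\<forall>W1 W2. hermitian W1 \<and> hermitian W2 \<and> loewner_ge W1 W2 \<longrightarrow> g W1 \<ge> g W2)"

definition MNI :: "(complex^'r^'r \<Rightarrow> real) \<Rightarrow> bool" where
  "MNI g \<longleftrightarrow> (\<forall>W1 W2. hermitian W1 \<and> hermitian W2 \<and> loewner_ge W1 W2 \<longrightarrow> g W1 \<le> g W2)"

text \<open>The family G: differentiable convex functions on the real vector space of
  Hermitian matrices that are MND or MNI (values off the Hermitian matrices are irrelevant).\<close>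
definition class_G :: "(complex^'r^'r \<Rightarrow> real) \<Rightarrow> bool" where
  "class_G g \<longleftrightarrow> convex_on hermitian_set g
     \<and> (\<forall>W\<in>hermitian_set. g differentiable (at W within hermitian_set))
     \<and> (MND g \<or> MNI g)"

definition herm_grad :: "(complex^'r^'r \<Rightarrow> real) \<Rightarrow> complex^'r^'r \<Rightarrow> complex^'r^'r" where
  "herm_grad g W0 = (SOME G. hermitian G \<and>
     (g has_derivative (\<lambda>V. Re (trace (V ** G)))) (at W0 within hermitian_set))"

definition lin_L :: "(complex^'r^'r \<Rightarrow> real) \<Rightarrow> complex^'n^'n \<Rightarrow> complex^'r^'n
     \<Rightarrow> complex^'r^'n \<Rightarrow> complex^'r^'r" where
  "lin_L g A X0 X = (if MND g then
       cadj X ** neg_part A ** X + cadj X ** pos_part A ** X0 + cadj X0 ** pos_part A ** X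
         - cadj X0 ** pos_part A ** X0
     else
       cadj X ** pos_part A ** X + cadj X ** neg_part A ** X0 + cadj X0 ** neg_part A ** X
         - cadj X0 ** neg_part A ** X0)"

definition lower_bnd :: "(complex^'r^'r \<Rightarrow> real) \<Rightarrow> complex^'n^'n \<Rightarrow> complex^'r^'n
     \<Rightarrow> complex^'r^'n \<Rightarrow> real" where
  "lower_bnd g A X0 X =
     (let W0 = cadj X0 ** A ** X0; G = herm_grad g W0
      in Re (trace (lin_L g A X0 X ** G)) + g W0 - Re (trace (W0 ** G)))"

definition upper_bnd :: "(complex^'r^'r \<Rightarrow> real) \<Rightarrow> complex^'n^'n \<Rightarrow> complex^'r^'n
     \<Rightarrow> complex^'r^'n \<Rightarrow> real" where
  "upper_bnd g A X0 X = (if MND g then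
       g (cadj X ** pos_part A ** X + cadj X ** neg_part A ** X0 + cadj X0 ** neg_part A ** X
          - cadj X0 ** neg_part A ** X0)
     else
       g (cadj X ** neg_part A ** X + cadj X ** pos_part A ** X0 + cadj X0 ** pos_part A ** X
          - cadj X0 ** pos_part A ** X0))"

definition gqmf :: "nat \<Rightarrow> (nat \<Rightarrow> real) \<Rightarrow> (nat \<Rightarrow> complex^'r^'r \<Rightarrow> real)
     \<Rightarrow> (nat \<Rightarrow> complex^'n^'n) \<Rightarrow> complex^'r^'n \<Rightarrow> real" where
  "gqmf K \<alpha> g A X = (\<Sum>k=1..K. \<alpha> k * g k (cadj X ** A k ** X))"

definition fbar :: "nat \<Rightarrow> (nat \<Rightarrow> real) \<Rightarrow> (nat \<Rightarrow> complex^'r^'r \<Rightarrow> real)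
     \<Rightarrow> (nat \<Rightarrow> complex^'n^'n) \<Rightarrow> complex^'r^'n \<Rightarrow> complex^'r^'n \<Rightarrow> real" where
  "fbar K \<alpha> g A X0 X =
     (\<Sum>k\<in>{k\<in>{1..K}. \<alpha> k > 0}. \<alpha> k * lower_bnd (g k) (A k) X0 X)
   + (\<Sum>k\<in>{k\<in>{1..K}. \<alpha> k < 0}. \<alpha> k * upper_bnd (g k) (A k) X0 X)"

end

theory Submission
  imports Defs
begin

lemma cadj_nth[simp]: "cadj X $ i $ j = cnj (X $ j $ i)"
  by (simp add: cadj_def)

lemma cadj_cadj[simp]: "cadj (cadj X) = X"
  by (simp add: vec_eq_iff)

lemma cadj_add: "cadj (X + Y) = cadj X + cadj Y"
  by (simp add: vec_eq_iff)

lemma cadj_diff: "cadj (X - Y) = cadj X - cadj Y"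
  by (simp add: vec_eq_iff)

lemma cadj_minus: "cadj (- X) = - cadj X"
  by (simp add: vec_eq_iff)

lemma cadj_scaleR: "cadj (c *\<^sub>R X) = c *\<^sub>R cadj X"
  by (simp add: vec_eq_iff)

lemma cadj_mult: "cadj (X ** Y) = cadj Y ** cadj X"
  by (simp add: vec_eq_iff matrix_matrix_mult_def mult.commute)

lemma cadj_zero[simp]: "cadj 0 = 0"
  by (simp add: vec_eq_iff)

lemma matrix_sub_ldistrib: "(A::'a::ring_1^'n^'m) ** (B - C) = A ** B - A ** C"
  by (simp add: vec_eq_iff matrix_matrix_mult_def sum_subtractf algebra_simps)

lemma matrix_sub_rdistrib: "((B::'a::ring_1^'n^'m) - C) ** A = B ** A - C ** A"
  by (simp add: vec_eq_iff matrix_matrix_mult_def sum_subtractf algebra_simps)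

lemma matrix_neg_ldistrib: "(A::'a::ring_1^'n^'m) ** (- B) = - (A ** B)"
  by (simp add: vec_eq_iff matrix_matrix_mult_def sum_negf)

lemma matrix_neg_rdistrib: "(- (B::'a::ring_1^'n^'m)) ** A = - (B ** A)"
  by (simp add: vec_eq_iff matrix_matrix_mult_def sum_negf)

lemma cadj_rdiag[simp]: "cadj (rdiag d) = rdiag d"
  by (simp add: vec_eq_iff rdiag_def)

definition cip :: "complex^'n \<Rightarrow> complex^'n \<Rightarrow> complex" where
  "cip x y = (\<Sum>i\<in>UNIV. cnj (x $ i) * y $ i)"

lemma cip_add_right: "cip x (y + z) = cip x y + cip x z"
  by (simp add: cip_def algebra_simps sum.distrib)
lemma cip_add_left: "cip (x + y) z = cip x z + cip y z"
  by (simp add: cip_def algebra_simps sum.distrib)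
lemma cip_diff_right: "cip x (y - z) = cip x y - cip x z"
  by (simp add: cip_def algebra_simps sum_subtractf)
lemma cip_diff_left: "cip (x - y) z = cip x z - cip y z"
  by (simp add: cip_def algebra_simps sum_subtractf)
lemma cip_scaleR_right: "cip x (c *\<^sub>R y) = c *\<^sub>R cip x y"
  by (simp add: cip_def sum_distrib_left) (simp add: scaleR_conv_of_real algebra_simps sum_distrib_left)
lemma cip_scaleR_left: "cip (c *\<^sub>R x) y = c *\<^sub>R cip x y"
  by (simp add: cip_def sum_distrib_left) (simp add: scaleR_conv_of_real algebra_simps sum_distrib_left)
lemma cip_smult_right: "cip x (c *s y) = c * cip x y"
  by (simp add: cip_def sum_distrib_left algebra_simps)
lemma cip_smult_left: "cip (c *s x) y = cnj c * cip x y"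
  by (simp add: cip_def sum_distrib_left algebra_simps)
lemma cip_sum_right: "finite S \<Longrightarrow> cip x (sum f S) = (\<Sum>s\<in>S. cip x (f s))"
  by (induction S rule: finite_induct) (auto simp: cip_def distrib_left sum.distrib)
lemma cip_cnj: "cip y x = cnj (cip x y)"
  by (simp add: cip_def mult.commute)
lemma cip_zero_right[simp]: "cip x 0 = 0" by (simp add: cip_def)
lemma cip_zero_left[simp]: "cip 0 x = 0" by (simp add: cip_def)

lemma cip_self: "cip x x = complex_of_real ((norm x)^2)"
proof -
  have "(norm x)^2 = (\<Sum>i\<in>UNIV. (norm (x $ i))^2)"
    by (simp add: norm_vec_def L2_set_def sum_nonneg)
  then show ?thesis
    by (simp add: cip_def complex_norm_square mult.commute del: of_real_power)
qed

lemma cip_self_eq0: "cip x x = 0 \<longleftrightarrow> x = 0"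
  by (simp add: cip_self)

lemma cip_matrix: "cip x (M *v y) = cip (cadj M *v x) y"
  by (simp add: cip_def matrix_vector_mult_def sum_distrib_left sum_distrib_right
      algebra_simps) (rule sum.swap)

lemma hermitian_cadj: "hermitian A \<Longrightarrow> cadj A = A"
  by (simp add: hermitian_def)

lemma cip_herm: "hermitian A \<Longrightarrow> cip (A *v x) y = cip x (A *v y)"
  by (simp add: cip_matrix hermitian_cadj)

lemma Re_cip_herm_self: "hermitian A \<Longrightarrow> cip x (A *v x) = complex_of_real (Re (cip x (A *v x)))"
proof -
  assume h: "hermitian A"
  have c: "cnj (cip x (A *v x)) = cip x (A *v x)"
    using cip_cnj[of "A *v x" x] cip_herm[OF h, of x x] by simp
  then have "Im (cip x (A *v x)) = 0" by (metis c cnj.sel(2) neg_equal_zero)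
  then show ?thesis by (simp add: complex_eq_iff)
qed

definition ONS :: "(complex^'n) set \<Rightarrow> bool" where
  "ONS S \<longleftrightarrow> (\<forall>s\<in>S. \<forall>t\<in>S. cip s t = (if s = t then 1 else 0))"

lemma smult_decomp: "c *s s = Re c *\<^sub>R s + Im c *\<^sub>R (\<i> *s s)"
  by (simp add: vec_eq_iff complex_eq_iff)

lemma exists_orth_vec:
  fixes S :: "(complex^'n) set"
  assumes fin: "finite S" and card: "card S < CARD('n)" and on: "ONS S"
  shows "\<exists>v. v \<noteq> 0 \<and> (\<forall>s\<in>S. cip s v = 0)"
proof -
  let ?T = "S \<union> (\<lambda>s. \<i> *s s) ` S"
  have finT: "finite ?T" using fin by simp
  have "card ?T \<le> card S + card ((\<lambda>s. \<i> *s s) ` S)" by (rule card_Un_le)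
  also have "\<dots> \<le> 2 * card S" using card_image_le[OF fin, of "\<lambda>s. \<i> *s s"] by simp
  finally have cT: "card ?T < DIM(complex^'n)" using card by simp
  have "\<not> UNIV \<subseteq> span ?T"
  proof
    assume "UNIV \<subseteq> span ?T"
    from dim_le_card[OF this finT] cT show False by simp
  qed
  then obtain y where y: "y \<notin> span ?T" by blast
  define v where "v = y - (\<Sum>s\<in>S. cip s y *s s)"
  have orth: "cip t v = 0" if t: "t \<in> S" for t
  proof -
    have "cip t (\<Sum>s\<in>S. cip s y *s s) = (\<Sum>s\<in>S. cip s y * cip t s)"
      using fin by (simp add: cip_sum_right cip_smult_right)
    also have "\<dots> = (\<Sum>s\<in>S. if t = s then cip s y else 0)"
      using on t unfolding ONS_def by (intro sum.cong) auto
    also have "\<dots> = cip t y" using fin t by simp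
    finally show ?thesis by (simp add: v_def cip_diff_right)
  qed
  have "v \<noteq> 0"
  proof
    assume "v = 0"
    then have "y = (\<Sum>s\<in>S. cip s y *s s)" by (simp add: v_def)
    also have "\<dots> \<in> span ?T"
    proof (rule span_sum)
      fix s assume s: "s \<in> S"
      have e: "cip s y *s s = Re (cip s y) *\<^sub>R s + Im (cip s y) *\<^sub>R (\<i> *s s)"
        by (rule smult_decomp)
      show "cip s y *s s \<in> span ?T"
        unfolding e by (intro span_add span_scale span_base) (use s in auto)
    qed
    finally show False using y by simp
  qed
  with orth show ?thesis by blast
qed

lemma quad_ineq_zero:
  fixes a c :: real
  assumes "\<forall>t. 2*t*a + t^2*c \<le> 0" and "a \<ge> 0"
  shows "a = 0"
proof (rule ccontr)
  assume "a \<noteq> 0"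
  with assms(2) have a: "a > 0" by simp
  define t where "t = a / (\<bar>c\<bar> + 1)"
  have t: "t > 0" using a by (simp add: t_def)
  have "t * \<bar>c\<bar> < a" using a by (simp add: t_def field_simps)
  then have "t^2 * \<bar>c\<bar> < t * a" using t by (simp add: power2_eq_square mult.assoc)
  moreover have "t^2 * (- \<bar>c\<bar>) \<le> t^2 * c" by (rule mult_left_mono) auto
  moreover have "t * a > 0" using t a by simp
  ultimately have "2*t*a + t^2*c > 0" by (simp add: algebra_simps)
  with assms(1) show False by (meson not_le)
qed

lemma mv_scaleR: "(A::complex^'n^'m) *v (c *\<^sub>R x) = c *\<^sub>R (A *v x)"
  by (simp add: vec_eq_iff matrix_vector_mult_def scaleR_sum_right)

lemma q_scale: "cip (c *\<^sub>R z) (A *v (c *\<^sub>R z)) = (c^2) *\<^sub>R cip z (A *v z)"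
  by (simp add: mv_scaleR cip_scaleR_left cip_scaleR_right power2_eq_square)

lemma norm_sq_cip: "(norm x)^2 = Re (cip x x)"
  by (simp add: cip_self)

lemma spectral_step:
  fixes S :: "(complex^'n) set" and A :: "complex^'n^'n"
  assumes herm: "hermitian A" and fin: "finite S" and card: "card S < CARD('n)" and on: "ONS S"
    and eig: "\<forall>s\<in>S. \<exists>\<mu>::real. A *v s = \<mu> *\<^sub>R s"
  shows "\<exists>x. cip x x = 1 \<and> (\<forall>s\<in>S. cip s x = 0) \<and> (\<exists>\<mu>::real. A *v x = \<mu> *\<^sub>R x)"
proof -
  define V where "V = {x. \<forall>s\<in>S. cip s x = 0}"
  define K where "K = sphere 0 1 \<inter> V"
  define q where "q x = Re (cip x (A *v x))" for x
  have V_eq: "V = (\<Inter>s\<in>S. {x. cip s x = 0})" by (auto simp: V_def)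
  have contcip: "continuous_on UNIV (\<lambda>x. cip s x)" for s :: "complex^'n"
    unfolding cip_def by (intro continuous_intros)
  have "closed V" unfolding V_eq
    by (intro closed_INT ballI closed_Collect_eq contcip continuous_intros)
  then have compK: "compact K" unfolding K_def by (intro compact_Int_closed compact_sphere)
  obtain v where v: "v \<noteq> 0" "\<forall>s\<in>S. cip s v = 0" using exists_orth_vec[OF fin card on] by blast
  have "(1 / norm v) *\<^sub>R v \<in> K" using v by (simp add: K_def V_def cip_scaleR_right)
  then have Kne: "K \<noteq> {}" by blast
  have contq: "continuous_on K q" unfolding q_def cip_def matrix_vector_mult_def
    by (intro continuous_intros)
  obtain x where xK: "x \<in> K" and xmax: "\<forall>y\<in>K. q y \<le> q x"
    using continuous_attains_sup[OF compK Kne contq] by blast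
  define lam where "lam = q x"
  have nx: "norm x = 1" and xV: "x \<in> V" using xK by (auto simp: K_def)
  have cxx: "cip x x = 1" using nx by (simp add: cip_self)
  define w where "w = A *v x - lam *\<^sub>R x"
  have wV: "w \<in> V"
  proof -
    { fix s assume s: "s \<in> S"
      then obtain \<mu> :: real where mu: "A *v s = \<mu> *\<^sub>R s" using eig by blast
      have "cip s (A *v x) = cip (A *v s) x" using cip_herm[OF herm] by simp
      also have "\<dots> = 0" using xV s by (simp add: mu cip_scaleR_left V_def)
      finally have "cip s w = 0" using xV s by (simp add: w_def cip_diff_right cip_scaleR_right V_def) }
    then show ?thesis by (simp add: V_def)
  qed
  have Vbound: "q z \<le> lam * (norm z)^2" if z: "z \<in> V" for z
  proof (cases "z = 0")
    case True then show ?thesis by (simp add: q_def)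
  next
    case False
    have "(1 / norm z) *\<^sub>R z \<in> K" using z False by (simp add: K_def V_def cip_scaleR_right)
    then have "q ((1 / norm z) *\<^sub>R z) \<le> lam" using xmax by (simp add: lam_def)
    then have "(1 / norm z)^2 * q z \<le> lam" by (simp add: q_def q_scale)
    then show ?thesis using False by (simp add: field_simps power2_eq_square)
  qed
  have zV: "x + t *\<^sub>R w \<in> V" for t
    using xV wV by (simp add: V_def cip_add_right cip_scaleR_right)
  have e1: "Re (cip x (A *v w)) = Re (cip w (A *v x))"
    by (metis cip_cnj cip_herm[OF herm] cnj.sel(1))
  have e2: "Re (cip x w) = Re (cip w x)" by (metis cip_cnj cnj.sel(1))
  have Ax: "A *v x = w + lam *\<^sub>R x" by (simp add: w_def)
  have qx: "Re (cip x (A *v x)) = lam" by (simp add: lam_def q_def)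
  have ineq: "2*t*(norm w)^2 + t^2*(q w - lam * (norm w)^2) \<le> 0" for t
  proof -
    have c1: "cip (x + t *\<^sub>R w) (A *v (x + t *\<^sub>R w)) = cip x (A *v x) + t *\<^sub>R cip x (A *v w)
        + (t *\<^sub>R cip w (A *v x) + (t*t) *\<^sub>R cip w (A *v w))"
      by (simp add: matrix_vector_right_distrib mv_scaleR cip_add_left cip_add_right
          cip_scaleR_left cip_scaleR_right add.assoc scaleR_add_right)
    have c2: "cip (x + t *\<^sub>R w) (x + t *\<^sub>R w) = cip x x + t *\<^sub>R cip x w
        + (t *\<^sub>R cip w x + (t*t) *\<^sub>R cip w w)"
      by (simp add: cip_add_left cip_add_right cip_scaleR_left cip_scaleR_right add.assoc scaleR_add_right)
    have r1: "q (x + t *\<^sub>R w) = lam + 2*t*Re (cip w (A *v x)) + t^2 * q w"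
      using e1 qx unfolding q_def c1 by (simp add: power2_eq_square)
    have r2: "(norm (x + t *\<^sub>R w))^2 = 1 + 2*t*Re (cip w x) + t^2 * (norm w)^2"
      using e2 cxx unfolding norm_sq_cip c2 by (simp add: power2_eq_square)
    have r3: "Re (cip w (A *v x)) = (norm w)^2 + lam * Re (cip w x)"
      by (simp add: Ax cip_add_right cip_scaleR_right norm_sq_cip)
    have "q (x + t *\<^sub>R w) \<le> lam * (norm (x + t *\<^sub>R w))^2" using Vbound[OF zV] .
    then have "lam + 2*t*((norm w)^2 + lam * Re (cip w x)) + t^2 * q w
       \<le> lam * (1 + 2*t*Re (cip w x) + t^2 * (norm w)^2)"
      unfolding r1 r2 r3 .
    then show ?thesis by (simp add: algebra_simps)
  qed
  have "(norm w)^2 = 0"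
    by (rule quad_ineq_zero[of _ "q w - lam * (norm w)^2"]) (use ineq in auto)
  then have "w = 0" by simp
  then have "A *v x = lam *\<^sub>R x" by (simp add: w_def)
  with cxx xV show ?thesis by (auto simp: V_def)
qed

lemma spectral_sets:
  fixes A :: "complex^'n^'n"
  assumes herm: "hermitian A"
  shows "m \<le> CARD('n) \<Longrightarrow> \<exists>S. finite S \<and> card S = m \<and> ONS S \<and> (\<forall>s\<in>S. \<exists>\<mu>::real. A *v s = \<mu> *\<^sub>R s)"
proof (induction m)
  case 0
  show ?case by (rule exI[of _ "{}"]) (simp add: ONS_def)
next
  case (Suc m)
  then obtain S where S: "finite S" "card S = m" "ONS S" "\<forall>s\<in>S. \<exists>\<mu>::real. A *v s = \<mu> *\<^sub>R s"
    by auto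
  have "card S < CARD('n)" using Suc.prems S(2) by simp
  from spectral_step[OF herm S(1) this S(3) S(4)]
  obtain x where x: "cip x x = 1" "\<forall>s\<in>S. cip s x = 0" "\<exists>\<mu>::real. A *v x = \<mu> *\<^sub>R x" by blast
  have xS: "x \<notin> S" using x(1,2) by force
  have "ONS (insert x S)"
    unfolding ONS_def
  proof (intro ballI)
    fix s t assume s: "s \<in> insert x S" and t: "t \<in> insert x S"
    show "cip s t = (if s = t then 1 else 0)"
    proof (cases "s = x")
      case True
      then show ?thesis using t x xS cip_cnj[of x t] by (auto simp: )
    next
      case False
      then show ?thesis using s t x S(3) unfolding ONS_def by auto
    qed
  qed
  then show ?case using S x xS by (intro exI[of _ "insert x S"]) auto
qed

lemma mult_rdiag_right: "((M::complex^'n^'m) ** rdiag d) $ i $ j = M $ i $ j * complex_of_real (d $ j)"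
  by (simp add: matrix_matrix_mult_def rdiag_def if_distrib cong: if_cong)

lemma mult_rdiag_left: "(rdiag d ** (M::complex^'m^'n)) $ i $ j = complex_of_real (d $ i) * M $ i $ j"
proof -
  have e: "(if i = k then complex_of_real (d $ i) else 0) * M $ k $ j
     = (if i = k then complex_of_real (d $ i) * M $ k $ j else 0)" for k by simp
  show ?thesis unfolding matrix_matrix_mult_def rdiag_def by (simp add: e)
qed

lemma spectral:
  fixes A :: "complex^'n^'n"
  assumes herm: "hermitian A"
  shows "\<exists>U lam. unitary U \<and> A = U ** rdiag lam ** cadj U"
proof -
  obtain S where S: "finite S" "card S = CARD('n)" "ONS S" "\<forall>s\<in>S. \<exists>\<mu>::real. A *v s = \<mu> *\<^sub>R s"
    using spectral_sets[OF herm, of "CARD('n)"] by auto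
  obtain f where f: "bij_betw f (UNIV::'n set) S"
    using finite_same_card_bij[of "UNIV::'n set" S] S by auto
  define U :: "complex^'n^'n" where "U = (\<chi> i j. f j $ i)"
  define lam :: "real^'n" where "lam = (\<chi> j. SOME \<mu>. A *v f j = \<mu> *\<^sub>R f j)"
  have fS: "f j \<in> S" for j using f by (auto simp: bij_betw_def)
  have finj: "f i = f j \<longleftrightarrow> i = j" for i j using f by (auto simp: bij_betw_def inj_on_def)
  have eig: "A *v f j = (lam $ j) *\<^sub>R f j" for j
  proof -
    have "\<exists>\<mu>. A *v f j = \<mu> *\<^sub>R f j" using S(4) fS by blast
    then have "A *v f j = (SOME \<mu>. A *v f j = \<mu> *\<^sub>R f j) *\<^sub>R f j" by (rule someI_ex)
    then show ?thesis unfolding lam_def by simp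
  qed
  have UU: "cadj U ** U = mat 1"
  proof -
    have "(cadj U ** U) $ i $ j = cip (f i) (f j)" for i j
      by (simp add: matrix_matrix_mult_def U_def cip_def)
    also have "cip (f i) (f j) = (if i = j then 1 else 0)" for i j
      using S(3) fS finj unfolding ONS_def by auto
    finally show ?thesis by (simp add: vec_eq_iff mat_def)
  qed
  then have UU2: "U ** cadj U = mat 1" using matrix_left_right_inverse by blast
  have AU: "A ** U = U ** rdiag lam"
  proof -
    have "(A ** U) $ i $ j = (A *v f j) $ i" for i j
      by (simp add: matrix_matrix_mult_def matrix_vector_mult_def U_def)
    then show ?thesis
      by (simp add: vec_eq_iff eig mult_rdiag_right U_def) (simp add: scaleR_conv_of_real mult.commute)
  qed
  have "A = A ** (U ** cadj U)" by (simp add: UU2)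
  also have "\<dots> = U ** rdiag lam ** cadj U" by (simp add: matrix_mul_assoc AU)
  finally show ?thesis using UU UU2 unfolding unitary_def by blast
qed

lemma diag_fun_unique:
  fixes U V :: "complex^'n^'n"
  assumes U: "unitary U" and V: "unitary V"
    and eq: "U ** rdiag d ** cadj U = V ** rdiag e ** cadj V"
  shows "U ** rdiag (\<chi> i. \<phi> (d $ i)) ** cadj U = V ** rdiag (\<chi> i. \<phi> (e $ i)) ** cadj V"
proof -
  have U1: "U ** cadj U = mat 1" "cadj U ** U = mat 1" using U by (auto simp: unitary_def)
  have V1: "V ** cadj V = mat 1" "cadj V ** V = mat 1" using V by (auto simp: unitary_def)
  define W where "W = cadj V ** U"
  have "cadj V ** (U ** rdiag d ** cadj U) ** U = cadj V ** (V ** rdiag e ** cadj V) ** U"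
    by (simp add: eq)
  moreover have "X ** cadj U ** U = X" for X :: "complex^'n^'n"
    by (metis U1(2) matrix_mul_assoc matrix_mul_rid)
  ultimately have WD: "W ** rdiag d = rdiag e ** W"
    by (simp add: matrix_mul_assoc V1 W_def)
  have ent: "W $ i $ j * complex_of_real (\<phi> (d $ j)) = complex_of_real (\<phi> (e $ i)) * W $ i $ j" for i j
  proof -
    have "W $ i $ j * complex_of_real (d $ j) = complex_of_real (e $ i) * W $ i $ j"
      using arg_cong[OF WD, of "\<lambda>M. M $ i $ j"] by (simp add: mult_rdiag_right mult_rdiag_left)
    then have "W $ i $ j = 0 \<or> d $ j = e $ i" by (auto simp: mult.commute)
    then show ?thesis by auto
  qed
  have WP: "W ** rdiag (\<chi> i. \<phi> (d $ i)) = rdiag (\<chi> i. \<phi> (e $ i)) ** W"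
    by (simp add: vec_eq_iff mult_rdiag_right mult_rdiag_left ent)
  have "U ** rdiag (\<chi> i. \<phi> (d $ i)) ** cadj U = (V ** cadj V) ** U ** rdiag (\<chi> i. \<phi> (d $ i)) ** cadj U"
    by (simp add: V1)
  also have "\<dots> = V ** (W ** rdiag (\<chi> i. \<phi> (d $ i))) ** cadj U"
    by (simp add: W_def matrix_mul_assoc)
  also have "\<dots> = V ** rdiag (\<chi> i. \<phi> (e $ i)) ** (W ** cadj U)"
    by (simp add: WP matrix_mul_assoc)
  also have "\<dots> = V ** rdiag (\<chi> i. \<phi> (e $ i)) ** cadj V"
    by (simp add: W_def matrix_mul_assoc[symmetric] U1)
  finally show ?thesis .
qed

lemma psd_cip: "psd M \<longleftrightarrow> hermitian M \<and> (\<forall>x. 0 \<le> Re (cip x (M *v x)))"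
  by (simp add: psd_def cip_def)

lemma hermitian_udu: "hermitian (U ** rdiag d ** cadj U)"
  by (simp add: hermitian_def cadj_mult matrix_mul_assoc)

lemma psd_udu:
  assumes "\<forall>i. d $ i \<ge> 0"
  shows "psd (U ** rdiag d ** cadj U)"
proof -
  have "0 \<le> Re (cip x ((U ** rdiag d ** cadj U) *v x))" for x
  proof -
    define y where "y = cadj U *v x"
    have "cip x ((U ** rdiag d ** cadj U) *v x) = cip y (rdiag d *v y)"
      by (simp add: matrix_vector_mul_assoc[symmetric] cip_matrix y_def)
    also have "\<dots> = (\<Sum>i\<in>UNIV. complex_of_real (d $ i * (cmod (y $ i))^2))"
    proof -
      have "(rdiag d *v y) $ i = complex_of_real (d $ i) * y $ i" for i
      proof -
        have e: "(if i = k then complex_of_real (d $ i) else 0) * y $ k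
           = (if i = k then complex_of_real (d $ i) * y $ k else 0)" for k by simp
        show ?thesis unfolding matrix_vector_mult_def rdiag_def by (simp add: e)
      qed
      then show ?thesis unfolding cip_def
        by (intro sum.cong refl) (simp add: complex_norm_square algebra_simps del: of_real_power)
    qed
    finally show ?thesis using assms by (simp add: sum_nonneg)
  qed
  then show ?thesis by (simp add: psd_cip hermitian_udu)
qed

lemma pos_part_eq:
  assumes U: "unitary U" and A: "A = U ** rdiag lam ** cadj U"
  shows "pos_part A = U ** rdiag (\<chi> i. if lam $ i > 0 then lam $ i else 0) ** cadj U"
proof -
  let ?Q = "\<lambda>P. \<exists>U (lam::real^'a). unitary U \<and> A = U ** rdiag lam ** cadj U
      \<and> P = U ** rdiag (\<chi> i. if lam $ i > 0 then lam $ i else 0) ** cadj U"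
  have "?Q (U ** rdiag (\<chi> i. if lam $ i > 0 then lam $ i else 0) ** cadj U)" using U A by blast
  then have "?Q (pos_part A)" unfolding pos_part_def by (rule someI)
  then obtain U1 lam1 where U1: "unitary U1" "A = U1 ** rdiag lam1 ** cadj U1"
    "pos_part A = U1 ** rdiag (\<chi> i. if lam1 $ i > 0 then lam1 $ i else 0) ** cadj U1" by blast
  show ?thesis using diag_fun_unique[OF U1(1) U, of lam1 lam "\<lambda>x. if x > 0 then x else 0"] U1 A
    by simp
qed

lemma neg_part_eq:
  assumes U: "unitary U" and A: "A = U ** rdiag lam ** cadj U"
  shows "neg_part A = U ** rdiag (\<chi> i. if lam $ i < 0 then lam $ i else 0) ** cadj U"
proof -
  let ?Q = "\<lambda>P. \<exists>U (lam::real^'a). unitary U \<and> A = U ** rdiag lam ** cadj U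
      \<and> P = U ** rdiag (\<chi> i. if lam $ i < 0 then lam $ i else 0) ** cadj U"
  have "?Q (U ** rdiag (\<chi> i. if lam $ i < 0 then lam $ i else 0) ** cadj U)" using U A by blast
  then have "?Q (neg_part A)" unfolding neg_part_def by (rule someI)
  then obtain U1 lam1 where U1: "unitary U1" "A = U1 ** rdiag lam1 ** cadj U1"
    "neg_part A = U1 ** rdiag (\<chi> i. if lam1 $ i < 0 then lam1 $ i else 0) ** cadj U1" by blast
  show ?thesis using diag_fun_unique[OF U1(1) U, of lam1 lam "\<lambda>x. if x < 0 then x else 0"] U1 A
    by simp
qed

lemma matrix_add_rdistrib: "((B::'a::semiring_1^'n^'m) + C) ** A = B ** A + C ** A"
  by (simp add: vec_eq_iff matrix_matrix_mult_def sum.distrib algebra_simps)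

lemma rdiag_add: "rdiag a + rdiag b = rdiag (a + b)"
  by (simp add: vec_eq_iff rdiag_def)

lemma rdiag_neg: "- rdiag a = rdiag (- a)"
  by (simp add: vec_eq_iff rdiag_def)

lemma pos_neg_props:
  assumes "hermitian A"
  shows "pos_part A + neg_part A = A" "psd (pos_part A)" "psd (- neg_part A)"
    "hermitian (pos_part A)" "hermitian (neg_part A)"
proof -
  obtain U lam where U: "unitary U" and A: "A = U ** rdiag lam ** cadj U"
    using spectral[OF assms] by blast
  note P = pos_part_eq[OF U A] and N = neg_part_eq[OF U A]
  have "(\<chi> i. if lam $ i > 0 then lam $ i else 0) + (\<chi> i. if lam $ i < 0 then lam $ i else 0) = lam"
    by (simp add: vec_eq_iff)
  then show "pos_part A + neg_part A = A"
    unfolding P N by (simp add: matrix_add_ldistrib[symmetric] matrix_add_rdistrib[symmetric] rdiag_add A)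
  show "psd (pos_part A)" unfolding P by (rule psd_udu) simp
  have "- neg_part A = U ** rdiag (- (\<chi> i. if lam $ i < 0 then lam $ i else 0)) ** cadj U"
    unfolding N by (simp add: rdiag_neg[symmetric] matrix_neg_ldistrib matrix_neg_rdistrib)
  then show "psd (- neg_part A)" by (simp add: psd_udu)
  show "hermitian (pos_part A)" "hermitian (neg_part A)" unfolding P N by (rule hermitian_udu)+
qed

definition TT :: "complex^'n^'n \<Rightarrow> complex^'n^'n \<Rightarrow> complex^'r^'n \<Rightarrow> complex^'r^'n \<Rightarrow> complex^'r^'r" where
  "TT B C X0 X = cadj X ** B ** X + cadj X ** C ** X0 + cadj X0 ** C ** X - cadj X0 ** C ** X0"

lemmas mdist = matrix_add_ldistrib matrix_add_rdistrib matrix_sub_ldistrib matrix_sub_rdistrib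
  cadj_add cadj_diff cadj_scaleR scalar_matrix_assoc[symmetric] matrix_scalar_ac

lemma TT_expand:
  "TT B C X0 (Y + s *\<^sub>R D) = TT B C X0 Y
     + s *\<^sub>R (cadj D ** B ** Y + cadj Y ** B ** D + cadj D ** C ** X0 + cadj X0 ** C ** D)
     + (s * s) *\<^sub>R (cadj D ** B ** D)"
  unfolding TT_def by (simp add: mdist algebra_simps)

lemma TT_T1:
  "B + C = A \<Longrightarrow> cadj X ** A ** X - TT B C X0 X = cadj (X - X0) ** C ** (X - X0)"
  unfolding TT_def by (auto simp: mdist algebra_simps)

lemma TT_T2: "TT B C X0 X0 = cadj X0 ** (B + C) ** X0"
  unfolding TT_def by (simp add: mdist)

lemma TT_T3:
  assumes uv: "u + v = 1"
  shows "TT B C X0 (u *\<^sub>R X + v *\<^sub>R Y) = u *\<^sub>R TT B C X0 X + v *\<^sub>R TT B C X0 Y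
     - (u * v) *\<^sub>R (cadj (X - Y) ** B ** (X - Y))"
proof -
  let ?L = "\<lambda>D. cadj D ** B ** Y + cadj Y ** B ** D + cadj D ** C ** X0 + cadj X0 ** C ** D"
  have v: "v = 1 - u" using uv by simp
  have eq: "u *\<^sub>R X + v *\<^sub>R Y = Y + u *\<^sub>R (X - Y)" by (simp add: v algebra_simps)
  have e1: "TT B C X0 (u *\<^sub>R X + v *\<^sub>R Y) = TT B C X0 Y + u *\<^sub>R ?L (X - Y) + (u * u) *\<^sub>R (cadj (X - Y) ** B ** (X - Y))"
    unfolding eq by (rule TT_expand)
  have "TT B C X0 X = TT B C X0 (Y + 1 *\<^sub>R (X - Y))" by simp
  also have "\<dots> = TT B C X0 Y + 1 *\<^sub>R ?L (X - Y) + (1 * 1) *\<^sub>R (cadj (X - Y) ** B ** (X - Y))"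
    by (rule TT_expand)
  finally have e2: "TT B C X0 X = TT B C X0 Y + ?L (X - Y) + cadj (X - Y) ** B ** (X - Y)" by simp
  show ?thesis unfolding e1 e2 by (simp add: v algebra_simps)
qed

lemma hermitian_add: "hermitian A \<Longrightarrow> hermitian B \<Longrightarrow> hermitian (A + B)"
  by (simp add: hermitian_def cadj_add)
lemma hermitian_diff: "hermitian A \<Longrightarrow> hermitian B \<Longrightarrow> hermitian (A - B)"
  by (simp add: hermitian_def cadj_diff)
lemma hermitian_minus: "hermitian A \<Longrightarrow> hermitian (- A)"
  by (simp add: hermitian_def cadj_minus)
lemma hermitian_scaleR: "hermitian A \<Longrightarrow> hermitian (c *\<^sub>R A)"
  by (simp add: hermitian_def cadj_scaleR)
lemma hermitian_congr: "hermitian B \<Longrightarrow> hermitian (cadj X ** B ** X)"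
  by (simp add: hermitian_def cadj_mult matrix_mul_assoc)
lemma hermitian_pair: "hermitian B \<Longrightarrow> hermitian (cadj X ** B ** Y + cadj Y ** B ** X)"
  by (simp add: hermitian_def cadj_mult cadj_add matrix_mul_assoc add.commute)

lemma hermitian_TT: "hermitian B \<Longrightarrow> hermitian C \<Longrightarrow> hermitian (TT B C X0 X)"
proof -
  assume B: "hermitian B" and C: "hermitian C"
  have "TT B C X0 X = cadj X ** B ** X + (cadj X ** C ** X0 + cadj X0 ** C ** X) - cadj X0 ** C ** X0"
    by (simp add: TT_def add.assoc)
  then show ?thesis using B C
    by (simp add: hermitian_add hermitian_diff hermitian_congr hermitian_pair)
qed

lemma cip_congr: "cip x ((cadj Y ** P ** Y) *v x) = cip (Y *v x) (P *v (Y *v x))"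
proof -
  have "cip x ((cadj Y ** P ** Y) *v x) = cip x (cadj Y *v (P *v (Y *v x)))"
    by (simp add: matrix_vector_mul_assoc matrix_mul_assoc)
  also have "\<dots> = cip (Y *v x) (P *v (Y *v x))" by (simp add: cip_matrix)
  finally show ?thesis .
qed

lemma psd_congr: "psd P \<Longrightarrow> psd (cadj Y ** P ** Y)"
  unfolding psd_cip by (simp add: hermitian_congr cip_congr)

lemma psd_neg_congr: "psd (- N) \<Longrightarrow> psd (- (cadj Y ** N ** Y))"
  using psd_congr[of "- N" Y] by (simp add: matrix_neg_ldistrib matrix_neg_rdistrib)

definition tf :: "complex^'r^'r \<Rightarrow> complex^'r^'r \<Rightarrow> real" where
  "tf G M = Re (trace (M ** G))"

lemma trace_scaleR: "trace (c *\<^sub>R (M::complex^'n^'n)) = c *\<^sub>R trace M"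
  by (simp add: trace_def scaleR_sum_right)

lemma tf_add: "tf G (M + N) = tf G M + tf G N"
  by (simp add: tf_def matrix_add_rdistrib trace_add)
lemma tf_diff: "tf G (M - N) = tf G M - tf G N"
  by (simp add: tf_def matrix_sub_rdistrib trace_sub)
lemma tf_scaleR: "tf G (c *\<^sub>R M) = c * tf G M"
  by (simp add: tf_def scalar_matrix_assoc[symmetric] trace_scaleR)
lemma tf_minus: "tf G (- M) = - tf G M"
  by (simp add: tf_def matrix_neg_rdistrib trace_def sum_negf)

lemma tf_scaleR_G: "tf (c *\<^sub>R G) M = c * tf G M"
  by (simp add: tf_def matrix_scalar_ac scalar_matrix_assoc[symmetric] trace_scaleR)
lemma tf_add_G: "tf (G + H) M = tf G M + tf H M"
  by (simp add: tf_def matrix_add_ldistrib trace_add)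

lemma linear_tf: "linear (tf G)"
  by (rule linearI) (simp_all add: tf_add tf_scaleR)

lemma bounded_linear_tf: "bounded_linear (tf G)"
  using linear_tf linear_conv_bounded_linear by blast

lemma trace_cadj: "trace (cadj M) = cnj (trace M)"
  by (simp add: trace_def)

lemma tf_cadj_herm:
  assumes "hermitian V"
  shows "tf (cadj G) V = tf G V"
proof -
  have "V ** cadj G = cadj (G ** V)" using assms by (simp add: cadj_mult hermitian_def)
  then have "trace (V ** cadj G) = cnj (trace (G ** V))" by (simp add: trace_cadj)
  also have "\<dots> = cnj (trace (V ** G))" using trace_mul_sym[of G V] by metis
  finally show ?thesis by (simp add: tf_def)
qed

lemma hermitian_set_iff[simp]: "W \<in> hermitian_set \<longleftrightarrow> hermitian W"
  by (simp add: hermitian_set_def)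

lemma trace_axis: "trace (axis i (axis j v) ** (G::complex^'r^'r)) = v * G $ j $ i"
proof -
  have e: "(\<Sum>k\<in>UNIV. axis i (axis j v) $ a $ k * G $ k $ a) = (if a = i then v * G $ j $ i else 0)" for a
  proof -
    have "(\<Sum>k\<in>UNIV. axis i (axis j v) $ a $ k * G $ k $ a)
        = (\<Sum>k\<in>UNIV. if a = i \<and> k = j then v * G $ j $ a else 0)"
      by (intro sum.cong) (auto simp: axis_def)
    then show ?thesis by (auto simp: sum.If_cases)
  qed
  show ?thesis unfolding trace_def matrix_matrix_mult_def by (simp add: e)
qed

lemma grad_exists:
  fixes g :: "complex^'r^'r \<Rightarrow> real"
  assumes der: "(g has_derivative D) (at W0 within hermitian_set)" and W0: "hermitian W0"
  shows "\<exists>G. hermitian G \<and> (g has_derivative tf G) (at W0 within hermitian_set)"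
proof -
  have blD: "bounded_linear D" using has_derivative_bounded_linear[OF der] .
  then have linD: "linear D" by (rule bounded_linear.linear)
  define G0 :: "complex^'r^'r" where
    "G0 = (\<chi> j i. Complex (D (axis i (axis j 1))) (- D (axis i (axis j \<i>))))"
  have "tf G0 = D"
  proof (rule linear_eq_stdbasis[OF linear_tf linD])
    fix b :: "complex^'r^'r" assume "b \<in> Basis"
    then obtain i j v where b: "b = axis i (axis j v)" and v: "v = 1 \<or> v = \<i>"
      by (auto simp: Basis_vec_def Basis_complex_def)
    show "tf G0 b = D b" using v by (auto simp: b tf_def trace_axis G0_def)
  qed
  define G where "G = (1/2) *\<^sub>R (G0 + cadj G0)"
  have hG: "hermitian G" by (simp add: G_def hermitian_def cadj_scaleR cadj_add add.commute)
  have tfG: "tf G V = D V" if V: "hermitian V" for V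
  proof -
    have "tf G V = (1/2) * (tf G0 V + tf (cadj G0) V)"
      by (simp add: G_def tf_scaleR_G tf_add_G)
    also have "\<dots> = tf G0 V" using tf_cadj_herm[OF V] by simp
    finally show ?thesis using \<open>tf G0 = D\<close> by simp
  qed
  have "(g has_derivative tf G) (at W0 within hermitian_set)"
    unfolding has_derivative_within
  proof
    show "bounded_linear (tf G)" by (rule bounded_linear_tf)
    have lim: "((\<lambda>y. (1 / norm (y - W0)) *\<^sub>R (g y - (g W0 + D (y - W0)))) \<longlongrightarrow> 0) (at W0 within hermitian_set)"
      using der unfolding has_derivative_within by blast
    have ev: "\<forall>\<^sub>F y in at W0 within hermitian_set.
        (1 / norm (y - W0)) *\<^sub>R (g y - (g W0 + D (y - W0))) = (1 / norm (y - W0)) *\<^sub>R (g y - (g W0 + tf G (y - W0)))"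
      unfolding eventually_at_filter
      by (rule always_eventually) (auto simp: tfG hermitian_diff W0)
    show "((\<lambda>y. (1 / norm (y - W0)) *\<^sub>R (g y - (g W0 + tf G (y - W0)))) \<longlongrightarrow> 0) (at W0 within hermitian_set)"
      using tendsto_cong[OF ev] lim by simp
  qed
  with hG show ?thesis by blast
qed

lemma scaleR_mv: "((c::real) *\<^sub>R (P::complex^'n^'m)) *v x = c *\<^sub>R (P *v x)"
  by (simp add: vec_eq_iff matrix_vector_mult_def scaleR_sum_right)

lemma psd_scaleR: "c \<ge> 0 \<Longrightarrow> psd P \<Longrightarrow> psd (c *\<^sub>R P)"
  unfolding psd_cip by (simp add: hermitian_scaleR scaleR_mv cip_scaleR_right)

lemma tf_eta: "(\<lambda>V. Re (trace (V ** G))) = tf G"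
  by (simp add: tf_def fun_eq_iff)

lemma herm_grad_props:
  assumes g: "class_G g" and W0: "hermitian W0"
  shows "hermitian (herm_grad g W0)" "(g has_derivative tf (herm_grad g W0)) (at W0 within hermitian_set)"
proof -
  from g W0 have "g differentiable (at W0 within hermitian_set)" by (simp add: class_G_def)
  then obtain D where "(g has_derivative D) (at W0 within hermitian_set)"
    by (auto simp: differentiable_def)
  from grad_exists[OF this W0]
  have ex: "\<exists>G. hermitian G \<and> (g has_derivative (\<lambda>V. Re (trace (V ** G)))) (at W0 within hermitian_set)"
    by (simp add: tf_eta)
  from someI_ex[OF ex]
  show "hermitian (herm_grad g W0)" "(g has_derivative tf (herm_grad g W0)) (at W0 within hermitian_set)"
    unfolding herm_grad_def tf_eta by auto
qed

lemma path_deriv: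
  "((\<lambda>t::real. W0 + t *\<^sub>R V) has_derivative (\<lambda>t. t *\<^sub>R V)) (at x within S)"
  by (auto intro!: derivative_eq_intros)

lemma restrict_deriv:
  fixes g :: "complex^'r^'r \<Rightarrow> real"
  assumes der: "(g has_derivative D) (at W0 within hermitian_set)"
    and sub: "\<And>t. t \<in> S \<Longrightarrow> hermitian (W0 + t *\<^sub>R V)"
    and S: "0 \<in> S"
  shows "((\<lambda>t. g (W0 + t *\<^sub>R V)) has_real_derivative D V) (at 0 within S)"
proof -
  have img: "(\<lambda>t::real. W0 + t *\<^sub>R V) ` S \<subseteq> hermitian_set" using sub by auto
  have "(g has_derivative D) (at ((\<lambda>t::real. W0 + t *\<^sub>R V) 0) within (\<lambda>t::real. W0 + t *\<^sub>R V) ` S)"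
    using has_derivative_subset[OF der img] by simp
  from diff_chain_within[OF path_deriv this]
  have "((g \<circ> (\<lambda>t. W0 + t *\<^sub>R V)) has_derivative (D \<circ> (\<lambda>t. t *\<^sub>R V))) (at 0 within S)" .
  moreover have "D \<circ> (\<lambda>t. t *\<^sub>R V) = (*) (D V)"
    using has_derivative_bounded_linear[OF der]
    by (auto simp: fun_eq_iff linear_simps(5))
  ultimately show ?thesis by (simp add: has_field_derivative_def comp_def)
qed

lemma grad_ineq:
  fixes g :: "complex^'r^'r \<Rightarrow> real"
  assumes cvx: "convex_on hermitian_set g" and W0: "hermitian W0" and W: "hermitian W"
    and der: "(g has_derivative D) (at W0 within hermitian_set)"
  shows "g W0 + D (W - W0) \<le> g W"
proof (rule ccontr)
  assume "\<not> ?thesis"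
  then have gt: "D (W - W0) - (g W - g W0) > 0" by simp
  let ?V = "W - W0"
  have sub: "hermitian (W0 + t *\<^sub>R ?V)" for t
    using W0 W by (simp add: hermitian_add hermitian_scaleR hermitian_diff)
  have d1: "((\<lambda>t. g (W0 + t *\<^sub>R ?V)) has_real_derivative D ?V) (at 0 within {0..1})"
    by (rule restrict_deriv[OF der]) (auto simp: sub)
  have d2: "((\<lambda>t. g (W0 + t *\<^sub>R ?V) - t * (g W - g W0)) has_real_derivative D ?V - (g W - g W0)) (at 0 within {0..1})"
    using d1 by (auto intro!: derivative_eq_intros)
  from has_real_derivative_pos_inc_right[OF d2 gt]
  obtain d where d: "d > 0" "\<forall>h>0. 0 + h \<in> {0..1} \<longrightarrow> h < d \<longrightarrow>
      g (W0 + 0 *\<^sub>R ?V) - 0 * (g W - g W0) < g (W0 + (0 + h) *\<^sub>R ?V) - (0 + h) * (g W - g W0)"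
    by blast
  define h where "h = min (d/2) 1"
  have h: "h > 0" "h \<le> 1" "h < d" using d by (auto simp: h_def)
  then have lt: "g W0 < g (W0 + h *\<^sub>R ?V) - h * (g W - g W0)" using d by auto
  have "W0 + h *\<^sub>R ?V = (1 - h) *\<^sub>R W0 + h *\<^sub>R W" by (simp add: algebra_simps)
  then have "g (W0 + h *\<^sub>R ?V) \<le> (1 - h) * g W0 + h * g W"
    using convex_onD[OF cvx, of h W0 W] h W0 W by simp
  with lt show False by (simp add: algebra_simps)
qed

lemma grad_sign:
  fixes g :: "complex^'r^'r \<Rightarrow> real"
  assumes W0: "hermitian W0" and der: "(g has_derivative D) (at W0 within hermitian_set)"
    and P: "psd P"
  shows "MND g \<Longrightarrow> D P \<ge> 0" and "MNI g \<Longrightarrow> D P \<le> 0"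
proof -
  have hP: "hermitian P" using P by (simp add: psd_def)
  have sub: "hermitian (W0 + t *\<^sub>R P)" for t
    using W0 hP by (simp add: hermitian_add hermitian_scaleR)
  have d1: "((\<lambda>t. g (W0 + t *\<^sub>R P)) has_real_derivative D P) (at 0 within UNIV)"
    by (rule restrict_deriv[OF der]) (auto simp: sub)
  have ge: "loewner_ge (W0 + t *\<^sub>R P) W0" if "t \<ge> 0" for t
    using psd_scaleR[OF that P] by (simp add: loewner_ge_def)
  show "D P \<ge> 0" if M: "MND g"
  proof (rule ccontr)
    assume "\<not> D P \<ge> 0"
    then have "D P < 0" by simp
    from has_real_derivative_neg_dec_right[OF d1 this]
    obtain d where d: "d > 0" "\<forall>h>0. 0 + h \<in> UNIV \<longrightarrow> h < d \<longrightarrow> g (W0 + 0 *\<^sub>R P) > g (W0 + (0 + h) *\<^sub>R P)"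
      by blast
    then have "g W0 > g (W0 + (d/2) *\<^sub>R P)" by auto
    moreover have "g (W0 + (d/2) *\<^sub>R P) \<ge> g W0"
      using M ge[of "d/2"] d(1) sub W0 unfolding MND_def by auto
    ultimately show False by simp
  qed
  show "D P \<le> 0" if M: "MNI g"
  proof (rule ccontr)
    assume "\<not> D P \<le> 0"
    then have "D P > 0" by simp
    from has_real_derivative_pos_inc_right[OF d1 this]
    obtain d where d: "d > 0" "\<forall>h>0. 0 + h \<in> UNIV \<longrightarrow> h < d \<longrightarrow> g (W0 + 0 *\<^sub>R P) < g (W0 + (0 + h) *\<^sub>R P)"
      by blast
    then have "g W0 < g (W0 + (d/2) *\<^sub>R P)" by auto
    moreover have "g (W0 + (d/2) *\<^sub>R P) \<le> g W0"
      using M ge[of "d/2"] d(1) sub W0 unfolding MNI_def by auto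
    ultimately show False by simp
  qed
qed

lemma lin_L_TT: "lin_L g A X0 X = (if MND g then TT (neg_part A) (pos_part A) X0 X else TT (pos_part A) (neg_part A) X0 X)"
  by (simp add: lin_L_def TT_def)

lemma upper_TT: "upper_bnd g A X0 X = (if MND g then g (TT (pos_part A) (neg_part A) X0 X) else g (TT (neg_part A) (pos_part A) X0 X))"
  by (simp add: upper_bnd_def TT_def)

lemma lower_tf: "lower_bnd g A X0 X = tf (herm_grad g (cadj X0 ** A ** X0)) (lin_L g A X0 X)
   + g (cadj X0 ** A ** X0) - tf (herm_grad g (cadj X0 ** A ** X0)) (cadj X0 ** A ** X0)"
  by (simp add: lower_bnd_def Let_def tf_def)

lemma loewner_mono:
  assumes "MND g \<or> MNI g" "hermitian W1" "hermitian W2"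
  shows "MND g \<Longrightarrow> loewner_ge W1 W2 \<Longrightarrow> g W2 \<le> g W1"
    and "MNI g \<Longrightarrow> loewner_ge W1 W2 \<Longrightarrow> g W1 \<le> g W2"
  using assms by (auto simp: MND_def MNI_def)


lemma bb_Q: "bounded_bilinear (\<lambda>(X::complex^'r^'n) (Y::complex^'r^'n). cadj X ** B ** Y)"
proof -
  have "bilinear (\<lambda>(X::complex^'r^'n) (Y::complex^'r^'n). cadj X ** B ** Y)"
    unfolding bilinear_def
  proof (intro conjI allI)
    fix X :: "complex^'r^'n"
    show "linear (\<lambda>Y. cadj X ** B ** Y)"
      by (rule linearI) (simp_all add: matrix_add_ldistrib matrix_scalar_ac scalar_matrix_assoc[symmetric])
  next
    fix Y :: "complex^'r^'n"
    show "linear (\<lambda>X. cadj X ** B ** Y)"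
      by (rule linearI) (simp_all add: cadj_add cadj_scaleR matrix_add_rdistrib scalar_matrix_assoc[symmetric])
  qed
  then show ?thesis using bilinear_conv_bounded_bilinear by blast
qed

lemma deriv_Q: "((\<lambda>X. cadj X ** B ** X) has_derivative (\<lambda>H. cadj X0 ** B ** H + cadj H ** B ** X0)) (at X0)"
  using bounded_bilinear.FDERIV[OF bb_Q[of B] has_derivative_ident has_derivative_ident, of X0 UNIV]
  by simp

lemma deriv_Q1: "((\<lambda>X::complex^'r^'n. cadj X ** (C::complex^'n^'n) ** (Y::complex^'r^'n)) has_derivative (\<lambda>H. cadj H ** C ** Y)) F"
  by (rule bounded_linear_imp_has_derivative, rule bounded_bilinear.bounded_linear_left[OF bb_Q])

lemma deriv_Q2: "((\<lambda>X::complex^'r^'n. cadj (Y::complex^'r^'n) ** (C::complex^'n^'n) ** X) has_derivative (\<lambda>H. cadj Y ** C ** H)) F"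
  by (rule bounded_linear_imp_has_derivative, rule bounded_bilinear.bounded_linear_right[OF bb_Q])

lemma deriv_TT:
  assumes "B + C = A"
  shows "(TT B C X0 has_derivative (\<lambda>H. cadj X0 ** A ** H + cadj H ** A ** X0)) (at X0)"
proof -
  have "((\<lambda>X. cadj X ** B ** X + cadj X ** C ** X0 + cadj X0 ** C ** X - cadj X0 ** C ** X0) has_derivative
     (\<lambda>H. (cadj X0 ** B ** H + cadj H ** B ** X0) + cadj H ** C ** X0 + cadj X0 ** C ** H - 0)) (at X0)"
    by (intro has_derivative_add has_derivative_diff deriv_Q deriv_Q1 deriv_Q2 has_derivative_const)
  moreover have "(\<lambda>H. (cadj X0 ** B ** H + cadj H ** B ** X0) + cadj H ** C ** X0 + cadj X0 ** C ** H - 0)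
      = (\<lambda>H. cadj X0 ** A ** H + cadj H ** A ** X0)"
    unfolding assms[symmetric] by (simp add: fun_eq_iff matrix_add_ldistrib matrix_add_rdistrib ac_simps)
  ultimately show ?thesis unfolding TT_def[abs_def] by simp
qed

context
  fixes g :: "complex^'r^'r \<Rightarrow> real" and A :: "complex^'n^'n" and X0 :: "complex^'r^'n"
  assumes gG: "class_G g" and hA: "hermitian A"
begin

abbreviation "PP \<equiv> pos_part A"
abbreviation "NN \<equiv> neg_part A"
abbreviation "W0 \<equiv> cadj X0 ** A ** X0"
abbreviation "GG \<equiv> herm_grad g (cadj X0 ** A ** X0)"

lemma hPP: "hermitian PP" and hNN: "hermitian NN" and psdP: "psd PP" and psdN: "psd (- NN)"
  and PN: "PP + NN = A" and NP: "NN + PP = A"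
  using pos_neg_props[OF hA] by (auto simp: add.commute)

lemma hW0: "hermitian W0" using hermitian_congr[OF hA] .

lemma GG_props: "hermitian GG" "(g has_derivative tf GG) (at W0 within hermitian_set)"
  using herm_grad_props[OF gG hW0] by auto

lemma cvx: "convex_on hermitian_set g" using gG by (simp add: class_G_def)

lemma mono: "MND g \<or> MNI g" using gG by (simp add: class_G_def)

lemma hL: "hermitian (lin_L g A X0 X)"
  by (simp add: lin_L_TT hermitian_TT hPP hNN)

lemma hTT1: "hermitian (TT PP NN X0 X)" and hTT2: "hermitian (TT NN PP X0 X)"
  by (simp_all add: hermitian_TT hPP hNN)

lemma hW: "hermitian (cadj X ** A ** X)" using hermitian_congr[OF hA] .

lemma tf_sign_MND: "MND g \<Longrightarrow> psd Q \<Longrightarrow> tf GG Q \<ge> 0"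
  using grad_sign(1)[OF hW0 GG_props(2)] by blast

lemma tf_sign_MNI: "MNI g \<Longrightarrow> psd Q \<Longrightarrow> tf GG Q \<le> 0"
  using grad_sign(2)[OF hW0 GG_props(2)] by blast

lemma lower_le: "lower_bnd g A X0 X \<le> g (cadj X ** A ** X)"
proof -
  let ?L = "lin_L g A X0 X" and ?W = "cadj X ** A ** X"
  have "g W0 + tf GG (?L - W0) \<le> g ?L"
    by (rule grad_ineq[OF cvx hW0 hL GG_props(2)])
  then have a: "lower_bnd g A X0 X \<le> g ?L" by (simp add: lower_tf tf_diff)
  have "g ?L \<le> g ?W"
  proof (cases "MND g")
    case True
    have "?W - ?L = cadj (X - X0) ** PP ** (X - X0)" using True by (simp add: lin_L_TT TT_T1[OF NP])
    then have "loewner_ge ?W ?L" using psd_congr[OF psdP] by (simp add: loewner_ge_def)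
    then show ?thesis using loewner_mono(1)[OF mono hW hL True] by blast
  next
    case False
    then have M: "MNI g" using mono by blast
    have "?W - ?L = cadj (X - X0) ** NN ** (X - X0)" using False by (simp add: lin_L_TT TT_T1[OF PN])
    then have "?L - ?W = - (cadj (X - X0) ** NN ** (X - X0))" by (metis minus_diff_eq)
    then have "loewner_ge ?L ?W" using psd_neg_congr[OF psdN] by (simp add: loewner_ge_def)
    then show ?thesis using loewner_mono(2)[OF mono hL hW M] by blast
  qed
  with a show ?thesis by simp
qed

lemma upper_ge: "g (cadj X ** A ** X) \<le> upper_bnd g A X0 X"
proof (cases "MND g")
  case True
  let ?M = "TT PP NN X0 X" and ?W = "cadj X ** A ** X"
  have "?W - ?M = cadj (X - X0) ** NN ** (X - X0)" by (simp add: TT_T1[OF PN])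
  then have "?M - ?W = - (cadj (X - X0) ** NN ** (X - X0))" by (metis minus_diff_eq)
  then have "loewner_ge ?M ?W" using psd_neg_congr[OF psdN] by (simp add: loewner_ge_def)
  then show ?thesis using loewner_mono(1)[OF mono hTT1 hW True] True by (simp add: upper_TT)
next
  case False
  then have M: "MNI g" using mono by blast
  let ?M = "TT NN PP X0 X" and ?W = "cadj X ** A ** X"
  have "?W - ?M = cadj (X - X0) ** PP ** (X - X0)" by (simp add: TT_T1[OF NP])
  then have "loewner_ge ?W ?M" using psd_congr[OF psdP] by (simp add: loewner_ge_def)
  then show ?thesis using loewner_mono(2)[OF mono hW hTT2 M] False by (simp add: upper_TT)
qed

lemma lower_X0: "lower_bnd g A X0 X0 = g W0"
  by (simp add: lower_tf lin_L_TT TT_T2 PN NP)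

lemma upper_X0: "upper_bnd g A X0 X0 = g W0"
  by (simp add: upper_TT TT_T2 PN NP)

lemma lower_concave:
  assumes u: "u \<ge> 0" and v: "v \<ge> 0" and uv: "u + v = 1"
  shows "u * lower_bnd g A X0 X + v * lower_bnd g A X0 Y \<le> lower_bnd g A X0 (u *\<^sub>R X + v *\<^sub>R Y)"
proof -
  obtain B where B: "lin_L g A X0 = TT B (if MND g then PP else NN) X0" and
    sgn: "tf GG (cadj (X - Y) ** B ** (X - Y)) \<le> 0"
  proof (cases "MND g")
    case True
    have "tf GG (- (cadj (X - Y) ** NN ** (X - Y))) \<ge> 0"
      by (rule tf_sign_MND[OF True psd_neg_congr[OF psdN]])
    then show ?thesis using True that[of NN] by (simp add: lin_L_TT tf_minus fun_eq_iff)
  next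
    case False
    then have M: "MNI g" using mono by blast
    have "tf GG (cadj (X - Y) ** PP ** (X - Y)) \<le> 0"
      by (rule tf_sign_MNI[OF M psd_congr[OF psdP]])
    then show ?thesis using False that[of PP] by (simp add: lin_L_TT fun_eq_iff)
  qed
  have uvnn: "u * v \<ge> 0" using u v by simp
  have "lin_L g A X0 (u *\<^sub>R X + v *\<^sub>R Y) = u *\<^sub>R lin_L g A X0 X + v *\<^sub>R lin_L g A X0 Y
     - (u * v) *\<^sub>R (cadj (X - Y) ** B ** (X - Y))"
    unfolding B by (rule TT_T3[OF uv])
  then have "tf GG (lin_L g A X0 (u *\<^sub>R X + v *\<^sub>R Y)) \<ge> u * tf GG (lin_L g A X0 X) + v * tf GG (lin_L g A X0 Y)"
    using mult_nonneg_nonpos[OF uvnn sgn] by (simp add: tf_diff tf_add tf_scaleR)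
  moreover have "u * (a + k) + v * (b + k) = u * a + v * b + k" for a b k :: real
  proof -
    have v': "v = 1 - u" using uv by simp
    show ?thesis unfolding v' by (simp add: algebra_simps)
  qed
  ultimately show ?thesis
    unfolding lower_tf by (simp add: add_diff_eq[symmetric])
qed

lemma upper_convex:
  assumes u: "u \<ge> 0" and v: "v \<ge> 0" and uv: "u + v = 1"
  shows "upper_bnd g A X0 (u *\<^sub>R X + v *\<^sub>R Y) \<le> u * upper_bnd g A X0 X + v * upper_bnd g A X0 Y"
proof (cases "MND g")
  case True
  let ?M = "TT PP NN X0"
  have e: "?M (u *\<^sub>R X + v *\<^sub>R Y) = u *\<^sub>R ?M X + v *\<^sub>R ?M Y - (u * v) *\<^sub>R (cadj (X - Y) ** PP ** (X - Y))"
    by (rule TT_T3[OF uv])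
  have h: "hermitian (u *\<^sub>R ?M X + v *\<^sub>R ?M Y)" by (simp add: hermitian_add hermitian_scaleR hTT1)
  have "loewner_ge (u *\<^sub>R ?M X + v *\<^sub>R ?M Y) (?M (u *\<^sub>R X + v *\<^sub>R Y))"
    unfolding loewner_ge_def e using psd_scaleR[OF _ psd_congr[OF psdP], of "u * v"] u v by simp
  then have "g (?M (u *\<^sub>R X + v *\<^sub>R Y)) \<le> g (u *\<^sub>R ?M X + v *\<^sub>R ?M Y)"
    using loewner_mono(1)[OF mono h hTT1 True] by blast
  also have "\<dots> \<le> u * g (?M X) + v * g (?M Y)"
    using cvx u v uv hTT1 unfolding convex_on_def by auto
  finally show ?thesis using True by (simp add: upper_TT)
next
  case False
  then have Mi: "MNI g" using mono by blast
  let ?M = "TT NN PP X0"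
  have e: "?M (u *\<^sub>R X + v *\<^sub>R Y) = u *\<^sub>R ?M X + v *\<^sub>R ?M Y - (u * v) *\<^sub>R (cadj (X - Y) ** NN ** (X - Y))"
    by (rule TT_T3[OF uv])
  have h: "hermitian (u *\<^sub>R ?M X + v *\<^sub>R ?M Y)" by (simp add: hermitian_add hermitian_scaleR hTT2)
  have "?M (u *\<^sub>R X + v *\<^sub>R Y) - (u *\<^sub>R ?M X + v *\<^sub>R ?M Y) = (u * v) *\<^sub>R (- (cadj (X - Y) ** NN ** (X - Y)))"
    unfolding e by (simp add: scaleR_minus_right)
  then have "loewner_ge (?M (u *\<^sub>R X + v *\<^sub>R Y)) (u *\<^sub>R ?M X + v *\<^sub>R ?M Y)"
    unfolding loewner_ge_def using psd_scaleR[OF _ psd_neg_congr[OF psdN], of "u * v"] u v by simp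
  then have "g (?M (u *\<^sub>R X + v *\<^sub>R Y)) \<le> g (u *\<^sub>R ?M X + v *\<^sub>R ?M Y)"
    using loewner_mono(2)[OF mono hTT2 h Mi] by blast
  also have "\<dots> \<le> u * g (?M X) + v * g (?M Y)"
    using cvx u v uv hTT2 unfolding convex_on_def by auto
  finally show ?thesis using False by (simp add: upper_TT)
qed


lemma deriv_gW: "((\<lambda>X. g (cadj X ** A ** X)) has_derivative (\<lambda>H. tf GG (cadj X0 ** A ** H + cadj H ** A ** X0))) (at X0)"
proof -
  have sub: "range (\<lambda>X::complex^'r^'n. cadj X ** A ** X) \<subseteq> hermitian_set" using hW by auto
  have "(g has_derivative tf GG) (at ((\<lambda>X. cadj X ** A ** X) X0) within range (\<lambda>X::complex^'r^'n. cadj X ** A ** X))"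
    using has_derivative_subset[OF GG_props(2) sub] by simp
  from diff_chain_within[OF deriv_Q this]
  show ?thesis by (simp add: comp_def)
qed

lemma deriv_lower: "(lower_bnd g A X0 has_derivative (\<lambda>H. tf GG (cadj X0 ** A ** H + cadj H ** A ** X0))) (at X0)"
proof -
  obtain B C where BC: "B + C = A" and L: "lin_L g A X0 = TT B C X0"
    using NP PN by (cases "MND g") (auto simp: lin_L_TT fun_eq_iff)
  have "((\<lambda>X. tf GG (TT B C X0 X) + g W0 - tf GG W0) has_derivative (\<lambda>H. tf GG (cadj X0 ** A ** H + cadj H ** A ** X0) + 0 - 0)) (at X0)"
    by (intro has_derivative_add has_derivative_diff has_derivative_const
        bounded_linear.has_derivative[OF bounded_linear_tf] deriv_TT[OF BC])
  then show ?thesis unfolding lower_tf[abs_def] L by simp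
qed

lemma deriv_upper: "(upper_bnd g A X0 has_derivative (\<lambda>H. tf GG (cadj X0 ** A ** H + cadj H ** A ** X0))) (at X0)"
proof -
  obtain B C where BC: "B + C = A" and U: "upper_bnd g A X0 = (\<lambda>X. g (TT B C X0 X))"
    and hB: "hermitian B" and hC: "hermitian C"
    using NP PN hPP hNN by (cases "MND g") (auto simp: upper_TT fun_eq_iff)
  have sub: "range (TT B C X0) \<subseteq> hermitian_set" using hermitian_TT[OF hB hC] by auto
  have "TT B C X0 X0 = W0" by (simp add: TT_T2 BC)
  then have "(g has_derivative tf GG) (at (TT B C X0 X0) within range (TT B C X0))"
    using has_derivative_subset[OF GG_props(2) sub] by simp
  from diff_chain_within[OF deriv_TT[OF BC] this]
  show ?thesis unfolding U by (simp add: comp_def)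
qed
end

lemma split_sum:
  fixes \<alpha> h :: "nat \<Rightarrow> real"
  assumes "finite I"
  shows "(\<Sum>k\<in>I. \<alpha> k * h k) = (\<Sum>k\<in>{k\<in>I. \<alpha> k > 0}. \<alpha> k * h k) + (\<Sum>k\<in>{k\<in>I. \<alpha> k < 0}. \<alpha> k * h k)"
proof -
  have "(\<Sum>k\<in>I. \<alpha> k * h k) = (\<Sum>k\<in>I. (if \<alpha> k > 0 then \<alpha> k * h k else 0) + (if \<alpha> k < 0 then \<alpha> k * h k else 0))"
    by (rule sum.cong) auto
  also have "\<dots> = (\<Sum>k\<in>I. if \<alpha> k > 0 then \<alpha> k * h k else 0) + (\<Sum>k\<in>I. if \<alpha> k < 0 then \<alpha> k * h k else 0)"
    by (rule sum.distrib)
  finally show ?thesis using assms by (simp add: sum.inter_filter)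
qed

theorem mainTheorem3:
  fixes K :: nat and \<alpha> :: "nat \<Rightarrow> real"
    and g :: "nat \<Rightarrow> complex^'r^'r \<Rightarrow> real"
    and A :: "nat \<Rightarrow> complex^'n^'n"
    and X0 :: "complex^'r^'n"
  assumes "\<forall>k\<in>{1..K}. hermitian (A k)"
    and "\<forall>k\<in>{1..K}. class_G (g k)"
  shows "concave_on UNIV (fbar K \<alpha> g A X0)
    \<and> (\<forall>X. fbar K \<alpha> g A X0 X \<le> gqmf K \<alpha> g A X)
    \<and> fbar K \<alpha> g A X0 X0 = gqmf K \<alpha> g A X0
    \<and> (\<exists>D. (gqmf K \<alpha> g A has_derivative D) (at X0)
          \<and> (fbar K \<alpha> g A X0 has_derivative D) (at X0))"
proof -
  let ?I = "{1..K}"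
  let ?Ip = "{k\<in>?I. \<alpha> k > 0}" and ?In = "{k\<in>?I. \<alpha> k < 0}"
  have hA: "hermitian (A k)" and gG: "class_G (g k)" if "k \<in> ?I" for k
    using assms that by auto
  have finI: "finite ?I" by simp
  have conc: "concave_on UNIV (fbar K \<alpha> g A X0)"
    unfolding concave_on_def convex_on_def
  proof (intro conjI convex_UNIV ballI allI impI)
    fix X Y :: "complex^'r^'n" and u v :: real
    assume u: "u \<ge> 0" and v: "v \<ge> 0" and uv: "u + v = 1"
    let ?Z = "u *\<^sub>R X + v *\<^sub>R Y"
    have p: "u * (\<alpha> k * lower_bnd (g k) (A k) X0 X) + v * (\<alpha> k * lower_bnd (g k) (A k) X0 Y)
        \<le> \<alpha> k * lower_bnd (g k) (A k) X0 ?Z" if k: "k \<in> ?Ip" for k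
    proof -
      have "u * lower_bnd (g k) (A k) X0 X + v * lower_bnd (g k) (A k) X0 Y \<le> lower_bnd (g k) (A k) X0 ?Z"
        using lower_concave[OF gG hA u v uv] k by auto
      then have "\<alpha> k * (u * lower_bnd (g k) (A k) X0 X + v * lower_bnd (g k) (A k) X0 Y) \<le> \<alpha> k * lower_bnd (g k) (A k) X0 ?Z"
        using k by (intro mult_left_mono) auto
      then show ?thesis by (simp add: algebra_simps)
    qed
    have n: "u * (\<alpha> k * upper_bnd (g k) (A k) X0 X) + v * (\<alpha> k * upper_bnd (g k) (A k) X0 Y)
        \<le> \<alpha> k * upper_bnd (g k) (A k) X0 ?Z" if k: "k \<in> ?In" for k
    proof -
      have "upper_bnd (g k) (A k) X0 ?Z \<le> u * upper_bnd (g k) (A k) X0 X + v * upper_bnd (g k) (A k) X0 Y"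
        using upper_convex[OF gG hA u v uv] k by auto
      then have "\<alpha> k * (u * upper_bnd (g k) (A k) X0 X + v * upper_bnd (g k) (A k) X0 Y) \<le> \<alpha> k * upper_bnd (g k) (A k) X0 ?Z"
        using k by (intro mult_left_mono_neg) auto
      then show ?thesis by (simp add: algebra_simps)
    qed
    have "u * fbar K \<alpha> g A X0 X + v * fbar K \<alpha> g A X0 Y =
        (\<Sum>k\<in>?Ip. u * (\<alpha> k * lower_bnd (g k) (A k) X0 X) + v * (\<alpha> k * lower_bnd (g k) (A k) X0 Y))
      + (\<Sum>k\<in>?In. u * (\<alpha> k * upper_bnd (g k) (A k) X0 X) + v * (\<alpha> k * upper_bnd (g k) (A k) X0 Y))"
      by (simp add: fbar_def sum.distrib sum_distrib_left algebra_simps)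
    also have "\<dots> \<le> fbar K \<alpha> g A X0 ?Z"
      unfolding fbar_def by (intro add_mono sum_mono p n)
    finally show "- fbar K \<alpha> g A X0 ?Z \<le> u * - fbar K \<alpha> g A X0 X + v * - fbar K \<alpha> g A X0 Y"
      by simp
  qed
  have gq: "gqmf K \<alpha> g A X = (\<Sum>k\<in>?Ip. \<alpha> k * g k (cadj X ** A k ** X)) + (\<Sum>k\<in>?In. \<alpha> k * g k (cadj X ** A k ** X))" for X
    unfolding gqmf_def by (rule split_sum[OF finI])
  have le: "fbar K \<alpha> g A X0 X \<le> gqmf K \<alpha> g A X" for X
    unfolding gq fbar_def
  proof (intro add_mono sum_mono)
    fix k assume k: "k \<in> ?Ip"
    then show "\<alpha> k * lower_bnd (g k) (A k) X0 X \<le> \<alpha> k * g k (cadj X ** A k ** X)"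
      using lower_le[OF gG hA] by (intro mult_left_mono) auto
  next
    fix k assume k: "k \<in> ?In"
    then show "\<alpha> k * upper_bnd (g k) (A k) X0 X \<le> \<alpha> k * g k (cadj X ** A k ** X)"
      using upper_ge[OF gG hA] by (intro mult_left_mono_neg) auto
  qed
  have eq: "fbar K \<alpha> g A X0 X0 = gqmf K \<alpha> g A X0"
    unfolding gq fbar_def using lower_X0[OF gG hA] upper_X0[OF gG hA]
    by (intro arg_cong2[where f="(+)"] sum.cong) auto
  define d where "d k H = tf (herm_grad (g k) (cadj X0 ** A k ** X0)) (cadj X0 ** A k ** H + cadj H ** A k ** X0)" for k H
  define D where "D H = (\<Sum>k\<in>?I. \<alpha> k * d k H)" for H
  have dg: "(gqmf K \<alpha> g A has_derivative D) (at X0)"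
    unfolding gqmf_def[abs_def] D_def[abs_def]
    by (intro has_derivative_sum has_derivative_mult_right) (auto simp: d_def intro: deriv_gW[OF gG hA])
  have "(fbar K \<alpha> g A X0 has_derivative (\<lambda>H. (\<Sum>k\<in>?Ip. \<alpha> k * d k H) + (\<Sum>k\<in>?In. \<alpha> k * d k H))) (at X0)"
    unfolding fbar_def[abs_def]
    by (intro has_derivative_add has_derivative_sum has_derivative_mult_right)
      (auto simp: d_def intro: deriv_lower[OF gG hA] deriv_upper[OF gG hA])
  moreover have "(\<lambda>H. (\<Sum>k\<in>?Ip. \<alpha> k * d k H) + (\<Sum>k\<in>?In. \<alpha> k * d k H)) = D"
    unfolding D_def by (rule ext, rule split_sum[OF finI, symmetric])
  ultimately have df: "(fbar K \<alpha> g A X0 has_derivative D) (at X0)" by simp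
  show ?thesis using conc le eq dg df by blast
qed

end
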